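(* For every integer $k\ge1$ and all $a,b\in\mathbb{C}$ such that $\frac{a+k+1}{2}$ and $\frac{a+k+m}{2}$ ($m=0,1,\dots,k$) are not nonpositive integers, $$\frac{\Gamma\!\left(\frac{a+k+1}{2}\right)}{\Gamma\!\left(\frac{a-k+1}{2}-b\right)}=\sum_{m=0}^{k}\binom{k}{m}\left(a+\frac{k-1}{2}-\frac{bm}{k}-\frac{(k+1)(a+k-1)}{2(m+1)}\right)\frac{\Gamma\!\left(\frac{a+k+m}{2}\right)}{\Gamma\!\left(\frac{a-k+m}{2}-b+1\right)}.$$
   Context: $\Gamma$ is Euler's gamma function; $1/\Gamma$ is understood as the entire function (equal to $0$ at nonpositive integers). *)

theory Defs
  imports "HOL-Analysis.Analysis"
begin

end

theory Submission
  imports Defs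
begin

lemma tele: "(\<Sum>m = 0..N. f m - f (m+2)) = f 0 + f 1 - f (N+1) - f (N+2 :: nat)"
  for f :: "nat \<Rightarrow> complex"
  by (induction N) (auto simp: algebra_simps)

lemma binQ: "Suc m * (n choose Suc m) = (n - m) * (n choose m)"
  by (metis binomial_absorption binomial_absorb_comp)

lemma alg0: fixes B a b x u :: complex assumes "x \<noteq> 0" "u \<noteq> 0"
  shows "B * (a + (x - 1) / 2 - b * (u - 1) / x - (x + 1) * (a + x - 1) / (2 * u))
   = B * (u - 1) / x * ((a - x + (u - 1)) / 2 - b) - B * (x - (u - 1)) * (x - (u - 1) - 1) / (u * x) * ((a + x + (u - 1)) / 2)"
  using assms by (simp add: field_simps)
lemma alg: fixes B a b x y :: complex assumes "x \<noteq> 0" "y + 1 \<noteq> 0"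
  shows "B * (a + (x - 1) / 2 - b * y / x - (x + 1) * (a + x - 1) / (2 * (y + 1)))
   = B * y / x * ((a - x + y) / 2 - b) - B * (x - y) * (x - y - 1) / ((y + 1) * x) * ((a + x + y) / 2)"
  using alg0[OF assms, of B a b] by simp

lemma coeff:
  fixes n m :: nat and a b :: complex
  assumes "m \<le> Suc n"
  defines "k \<equiv> Suc n"
  shows "of_nat (k choose m) *
       (a + (of_nat k - 1) / 2 - b * of_nat m / of_nat k
          - (of_nat k + 1) * (a + of_nat k - 1) / (2 * (of_nat m + 1)))
   = (if m = 0 then 0 else of_nat (n choose (m-1))) * ((a - of_nat k + of_nat m) / 2 - b)
     - of_nat (n choose (m+1)) * ((a + of_nat k + of_nat m) / 2)"
proof -
  define B :: complex where "B = of_nat (k choose m)"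
  have P: "(if m = 0 then 0 else of_nat (n choose (m-1)) :: complex) = B * of_nat m / of_nat k"
  proof (cases m)
    case 0 then show ?thesis by simp
  next
    case (Suc j)
    have "Suc n * (n choose j) = (Suc n choose Suc j) * Suc j" by (rule Suc_times_binomial_eq)
    hence "(of_nat (Suc n) :: complex) * of_nat (n choose j) = of_nat (Suc n choose Suc j) * of_nat (Suc j)"
      by (metis of_nat_mult)
    thus ?thesis using Suc unfolding B_def k_def by (simp add: field_simps del: of_nat_Suc)
  qed
  have Q: "(of_nat (n choose (m+1)) :: complex) = B * (of_nat k - of_nat m) * (of_nat k - of_nat m - 1) / ((of_nat m + 1) * of_nat k)"
  proof -
    have e1: "Suc m * (n choose Suc m) = (n - m) * (n choose m)" by (rule binQ)
    have e2: "(Suc n - m) * (Suc n choose m) = Suc n * (n choose m)"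
      using binomial_absorb_comp[of "Suc n" m] by simp
    have "of_nat (Suc m) * of_nat (Suc n) * (of_nat (n choose (m+1)) :: complex)
          = of_nat (n - m) * of_nat (Suc n - m) * B"
    proof -
      have "Suc m * Suc n * (n choose (m+1)) = (n - m) * ((Suc n - m) * (Suc n choose m))"
      proof -
        have "Suc m * Suc n * (n choose (m+1)) = Suc n * (Suc m * (n choose Suc m))" by (simp add: algebra_simps)
        also have "\<dots> = (n - m) * (Suc n * (n choose m))" using e1 by (metis mult.left_commute)
        also have "\<dots> = (n - m) * ((Suc n - m) * (Suc n choose m))" by (simp only: e2)
        finally show ?thesis .
      qed
      hence "of_nat (Suc m * Suc n * (n choose (m+1))) = (of_nat ((n - m) * ((Suc n - m) * (Suc n choose m))) :: complex)"
        by simp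
      thus ?thesis unfolding B_def k_def by (simp only: of_nat_mult mult.assoc mult.left_commute)
    qed
    moreover have "(of_nat (n - m) :: complex) * of_nat (Suc n - m) = (of_nat k - of_nat m) * (of_nat k - of_nat m - 1)"
    proof (cases "m \<le> n")
      case True thus ?thesis unfolding k_def by (simp add: of_nat_diff Suc_diff_le)
    next
      case False hence "m = Suc n" using assms by simp
      thus ?thesis unfolding k_def by simp
    qed
    ultimately have X: "((of_nat m + 1) * of_nat k) * (of_nat (n choose (m+1)) :: complex)
        = B * (of_nat k - of_nat m) * (of_nat k - of_nat m - 1)"
      unfolding k_def by (simp only: of_nat_Suc mult.commute mult.left_commute add.commute)
    have nz: "((of_nat m + 1) * of_nat k :: complex) \<noteq> 0" 
    proof -
      have "(of_nat m + 1 :: complex) \<noteq> 0" by (metis of_nat_Suc of_nat_eq_0_iff nat.distinct(1) add.commute)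
      moreover have "(of_nat k :: complex) \<noteq> 0" unfolding k_def by (rule of_nat_neq_0)
      ultimately show ?thesis by simp
    qed
    show ?thesis using X nz by (simp add: eq_divide_eq mult.commute)
  qed
  have k0: "(of_nat k :: complex) \<noteq> 0" unfolding k_def by (rule of_nat_neq_0)
  have m0: "(of_nat m + 1 :: complex) \<noteq> 0" by (metis of_nat_Suc of_nat_eq_0_iff nat.distinct(1) add.commute)
  show ?thesis unfolding P Q B_def[symmetric] by (rule alg[OF k0 m0])
qed

theorem mainTheorem5:
  fixes k :: nat and a b :: complex
  assumes "k \<ge> 1"
    and "(a + of_nat k + 1) / 2 \<notin> \<int>\<^sub>\<le>\<^sub>0"
    and "\<And>m. m \<le> k \<Longrightarrow> (a + of_nat k + of_nat m) / 2 \<notin> \<int>\<^sub>\<le>\<^sub>0"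
  shows "Gamma ((a + of_nat k + 1) / 2) * rGamma ((a - of_nat k + 1) / 2 - b) =
    (\<Sum>m = 0..k. of_nat (k choose m) *
       (a + (of_nat k - 1) / 2 - b * of_nat m / of_nat k
          - (of_nat k + 1) * (a + of_nat k - 1) / (2 * (of_nat m + 1)))
       * Gamma ((a + of_nat k + of_nat m) / 2) * rGamma ((a - of_nat k + of_nat m) / 2 - b + 1))"
proof -
  obtain n where kn: "k = Suc n" using assms(1) by (cases k) auto
  define H :: "nat \<Rightarrow> complex" where
    "H m = (if m = 0 then 0 else of_nat (n choose (m-1))) * Gamma ((a + of_nat k + of_nat m) / 2)
            * rGamma ((a - of_nat k + of_nat m) / 2 - b)" for m
  have tm: "of_nat (k choose m) *
       (a + (of_nat k - 1) / 2 - b * of_nat m / of_nat k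
          - (of_nat k + 1) * (a + of_nat k - 1) / (2 * (of_nat m + 1)))
       * Gamma ((a + of_nat k + of_nat m) / 2) * rGamma ((a - of_nat k + of_nat m) / 2 - b + 1)
     = H m - H (m+2)" if mk: "m \<le> k" for m
  proof -
    define z where "z = (a - of_nat k + of_nat m) / 2 - b"
    define w where "w = (a + of_nat k + of_nat m) / 2"
    have w: "w \<notin> \<int>\<^sub>\<le>\<^sub>0" using assms(3)[OF mk] unfolding w_def .
    have g2: "Gamma ((a + of_nat k + of_nat (m+2)) / 2) = w * Gamma w"
    proof -
      have "(a + of_nat k + of_nat (m+2)) / 2 = w + 1" unfolding w_def by (simp add: field_simps)
      thus ?thesis using Gamma_plus1[OF w] by (simp only:)
    qed
    have r2: "rGamma ((a - of_nat k + of_nat (m+2)) / 2 - b) = rGamma (z + 1)"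
      unfolding z_def by (rule arg_cong[where f=rGamma]) (simp add: field_simps)
    have r0: "rGamma z = z * rGamma (z + 1)" using rGamma_plus1[of z] by simp
    have c: "of_nat (k choose m) *
       (a + (of_nat k - 1) / 2 - b * of_nat m / of_nat k
          - (of_nat k + 1) * (a + of_nat k - 1) / (2 * (of_nat m + 1)))
     = (if m = 0 then 0 else of_nat (n choose (m-1))) * z - of_nat (n choose (m+1)) * w"
      using coeff[of m n a b] mk kn unfolding z_def w_def by simp
    show ?thesis unfolding H_def c g2 r2
      unfolding z_def[symmetric] w_def[symmetric] r0 by (simp add: algebra_simps)
  qed
  have "(\<Sum>m = 0..k. of_nat (k choose m) *
       (a + (of_nat k - 1) / 2 - b * of_nat m / of_nat k
          - (of_nat k + 1) * (a + of_nat k - 1) / (2 * (of_nat m + 1)))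
       * Gamma ((a + of_nat k + of_nat m) / 2) * rGamma ((a - of_nat k + of_nat m) / 2 - b + 1))
     = (\<Sum>m = 0..k. H m - H (m+2))" by (rule sum.cong[OF refl]) (rule tm, simp)
  also have "\<dots> = H 0 + H 1 - H (k+1) - H (k+2)" by (rule tele)
  also have "\<dots> = H 1" unfolding H_def kn by (simp add: binomial_eq_0)
  also have "\<dots> = Gamma ((a + of_nat k + 1) / 2) * rGamma ((a - of_nat k + 1) / 2 - b)"
    unfolding H_def by simp
  finally show ?thesis by simp
qed
end
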